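(* Let $S$ be an ideal extension of a semigroup $T$ by a semigroup $U$, i.e. $T$ is isomorphic to an ideal $T'$ of $S$ and the Rees quotient $S/T'$ is isomorphic to $U$. If $T$ and $U$ are both defined by finite complete rewriting systems, then $S$ is also defined by a finite complete rewriting system.
   Context: For an ideal $I$ of a semigroup $S$, the Rees quotient $S/I$ is the quotient of $S$ by the congruence $\rho_I$ where $s\,\rho_I\, t$ iff $s=t$ or $s,t\in I$. A rewriting system $\langle X\mid R\rangle$ consists of an alphabet $X$ and rules $u\to v$ with $u,v\in X^+$; it is finite if $X,R$ are finite. One-step reduction: $w_1uw_2\to_R w_1vw_2$ for $(u\to v)\in R$; $\to_R^*$ is its reflexive transitive closure. It is noetherian if there is no infinite chain $w_1\to_R w_2\to_R\cdots$, confluent if $u\to_R^*v$, $u\to_R^*v'$ imply a common $w$ with $v\to_R^*w$, $v'\to_R^*w$, and complete if both. A semigroup is defined by $\langle X\mid R\rangle$ if it is isomorphic to $X^+$ modulo the congruence generated by $R$. *)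

theory Defs
  imports "HOL-Algebra.Group"
begin

text \<open>A semigroup is modelled as an HOL-Algebra monoid record whose unit field is ignored.\<close>

definition is_semigroup :: "('a, 'm) monoid_scheme \<Rightarrow> bool" where
  "is_semigroup S \<longleftrightarrow>
     (\<forall>x\<in>carrier S. \<forall>y\<in>carrier S. x \<otimes>\<^bsub>S\<^esub> y \<in> carrier S) \<and>
     (\<forall>x\<in>carrier S. \<forall>y\<in>carrier S. \<forall>z\<in>carrier S.
        (x \<otimes>\<^bsub>S\<^esub> y) \<otimes>\<^bsub>S\<^esub> z = x \<otimes>\<^bsub>S\<^esub> (y \<otimes>\<^bsub>S\<^esub> z))"

definition semigroup_ideal :: "'a set \<Rightarrow> ('a, 'm) monoid_scheme \<Rightarrow> bool" where
  "semigroup_ideal I S \<longleftrightarrow> I \<noteq> {} \<and> I \<subseteq> carrier S \<and>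
     (\<forall>s\<in>carrier S. \<forall>i\<in>I. s \<otimes>\<^bsub>S\<^esub> i \<in> I \<and> i \<otimes>\<^bsub>S\<^esub> s \<in> I)"

definition rees_class :: "'a set \<Rightarrow> 'a \<Rightarrow> 'a set" where
  "rees_class I s = (if s \<in> I then I else {s})"

definition rees_quotient :: "('a, 'm) monoid_scheme \<Rightarrow> 'a set \<Rightarrow> 'a set monoid" where
  "rees_quotient S I =
     \<lparr> carrier = rees_class I ` carrier S,
       mult = (\<lambda>A B. rees_class I ((SOME a. a \<in> A) \<otimes>\<^bsub>S\<^esub> (SOME b. b \<in> B))),
       one = undefined \<rparr>"

definition words_plus :: "'x set \<Rightarrow> 'x list set" where
  "words_plus X = {w. w \<in> lists X \<and> w \<noteq> []}"

definition rewriting_system :: "'x set \<Rightarrow> ('x list \<times> 'x list) set \<Rightarrow> bool" where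
  "rewriting_system X R \<longleftrightarrow> (\<forall>(u, v)\<in>R. u \<in> words_plus X \<and> v \<in> words_plus X)"

definition rstep :: "'x set \<Rightarrow> ('x list \<times> 'x list) set \<Rightarrow> ('x list \<times> 'x list) set" where
  "rstep X R = {(w1 @ u @ w2, w1 @ v @ w2) | w1 u v w2.
                  (u, v) \<in> R \<and> w1 \<in> lists X \<and> w2 \<in> lists X}"

definition noetherian_rs :: "'x set \<Rightarrow> ('x list \<times> 'x list) set \<Rightarrow> bool" where
  "noetherian_rs X R \<longleftrightarrow> \<not> (\<exists>f::nat \<Rightarrow> 'x list. \<forall>i. (f i, f (Suc i)) \<in> rstep X R)"

definition confluent_rs :: "'x set \<Rightarrow> ('x list \<times> 'x list) set \<Rightarrow> bool" where
  "confluent_rs X R \<longleftrightarrow>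
     (\<forall>u v v'. (u, v) \<in> (rstep X R)\<^sup>* \<and> (u, v') \<in> (rstep X R)\<^sup>* \<longrightarrow>
        (\<exists>w. (v, w) \<in> (rstep X R)\<^sup>* \<and> (v', w) \<in> (rstep X R)\<^sup>*))"

definition complete_rs :: "'x set \<Rightarrow> ('x list \<times> 'x list) set \<Rightarrow> bool" where
  "complete_rs X R \<longleftrightarrow> noetherian_rs X R \<and> confluent_rs X R"

definition rs_congruence :: "'x set \<Rightarrow> ('x list \<times> 'x list) set \<Rightarrow> ('x list \<times> 'x list) set" where
  "rs_congruence X R = (rstep X R \<union> (rstep X R)\<inverse>)\<^sup>* \<inter> (words_plus X \<times> words_plus X)"

definition rs_semigroup :: "'x set \<Rightarrow> ('x list \<times> 'x list) set \<Rightarrow> 'x list set monoid" where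
  "rs_semigroup X R =
     \<lparr> carrier = words_plus X // rs_congruence X R,
       mult = (\<lambda>A B. rs_congruence X R `` {(SOME a. a \<in> A) @ (SOME b. b \<in> B)}),
       one = undefined \<rparr>"

text \<open>\<open>S\<close> is defined by a finite complete rewriting system. Any finite alphabet can be
  relabelled into \<open>nat\<close>, so we take alphabets to be finite sets of naturals.\<close>

definition defined_by_fcrs :: "('a, 'm) monoid_scheme \<Rightarrow> bool" where
  "defined_by_fcrs S \<longleftrightarrow>
     (\<exists>(X::nat set) R. finite X \<and> finite R \<and> rewriting_system X R \<and> complete_rs X R \<and>
        S \<cong> rs_semigroup X R)"

end

theory Submission
  imports Defs "HOL-Library.Multiset" "HOL-Library.Countable"
begin

hide_const (open) Multiset.mult

lemma iso_inv_gen: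
  assumes "h \<in> iso G H" and clos: "\<And>a b. a \<in> carrier G \<Longrightarrow> b \<in> carrier G \<Longrightarrow> a \<otimes>\<^bsub>G\<^esub> b \<in> carrier G"
  shows "inv_into (carrier G) h \<in> iso H G"
proof -
  have h: "h \<in> hom G H" "bij_betw h (carrier G) (carrier H)"
    using assms by (auto simp add: iso_def bij_betw_inv_into)
  then have HG: "bij_betw (inv_into (carrier G) h) (carrier H) (carrier G)"
    by (simp add: bij_betw_inv_into)
  have "inv_into (carrier G) h \<in> hom H G"
    unfolding hom_def
  proof safe
    show *: "\<And>x. x \<in> carrier H \<Longrightarrow> inv_into (carrier G) h x \<in> carrier G"
      by (meson HG bij_betwE)
    show "inv_into (carrier G) h (x \<otimes>\<^bsub>H\<^esub> y) = inv_into (carrier G) h x \<otimes>\<^bsub>G\<^esub> inv_into (carrier G) h y"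
      if "x \<in> carrier H" "y \<in> carrier H" for x y
    proof (rule inv_into_f_eq)
      show "inj_on h (carrier G)"
        using bij_betw_def h(2) by blast
      show "inv_into (carrier G) h x \<otimes>\<^bsub>G\<^esub> inv_into (carrier G) h y \<in> carrier G"
        by (simp add: clos * that)
      show "h (inv_into (carrier G) h x \<otimes>\<^bsub>G\<^esub> inv_into (carrier G) h y) = x \<otimes>\<^bsub>H\<^esub> y"
        using h bij_betw_inv_into_right [of h] unfolding hom_def by (simp add: "*" that)
    qed
  qed
  then show ?thesis
    by (simp add: iso_def bij_betw_inv_into h)
qed

lemma rstepI: "(u,v) \<in> R \<Longrightarrow> w1 \<in> lists X \<Longrightarrow> w2 \<in> lists X \<Longrightarrow> (w1@u@w2, w1@v@w2) \<in> rstep X R"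
  unfolding rstep_def by blast

lemma rstep_ctxt:
  assumes "(u, v) \<in> rstep X R" "a \<in> lists X" "b \<in> lists X"
  shows "(a @ u @ b, a @ v @ b) \<in> rstep X R"
proof -
  from assms(1) obtain w1 u0 v0 w2 where "u = w1 @ u0 @ w2" "v = w1 @ v0 @ w2" "(u0, v0) \<in> R"
    "w1 \<in> lists X" "w2 \<in> lists X" unfolding rstep_def by blast
  then show ?thesis using assms(2,3) rstepI[of u0 v0 R "a@w1" X "w2@b"] by simp
qed

lemma rstep_R: "(u, v) \<in> R \<Longrightarrow> (u, v) \<in> rstep X R"
  using rstepI[of u v R "[]" X "[]"] by simp

lemma rstep_lists:
  assumes "rewriting_system X R" "(u, v) \<in> rstep X R"
  shows "u \<in> words_plus X" "v \<in> words_plus X"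
  using assms unfolding rstep_def rewriting_system_def words_plus_def by fastforce+

lemma rsteps_lists:
  assumes "rewriting_system X R" "(u, v) \<in> (rstep X R)\<^sup>*" "u \<in> words_plus X"
  shows "v \<in> words_plus X"
  using assms(2,3) by induction (use rstep_lists[OF assms(1)] in auto)

lemma noeth_wf: "noetherian_rs X R \<longleftrightarrow> wf ((rstep X R)\<inverse>)"
  unfolding noetherian_rs_def wf_iff_no_infinite_down_chain by auto

definition irr :: "'x set \<Rightarrow> ('x list \<times> 'x list) set \<Rightarrow> 'x list \<Rightarrow> bool" where
  "irr X R u \<longleftrightarrow> (\<nexists>v. (u, v) \<in> rstep X R)"

lemma nf_exists:
  assumes "noetherian_rs X R"
  shows "\<exists>n. (w, n) \<in> (rstep X R)\<^sup>* \<and> irr X R n"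
proof -
  have wf: "wf ((rstep X R)\<inverse>)" using assms noeth_wf by auto
  show ?thesis
  proof (induction w rule: wf_induct[OF wf])
    case (1 w)
    show ?case
    proof (cases "irr X R w")
      case True then show ?thesis by auto
    next
      case False
      then obtain v where v: "(w, v) \<in> rstep X R" unfolding irr_def by auto
      with 1 obtain n where "(v, n) \<in> (rstep X R)\<^sup>*" "irr X R n" by auto
      with v show ?thesis by (meson converse_rtrancl_into_rtrancl)
    qed
  qed
qed

lemma irr_rtrancl: "(u, w) \<in> (rstep X R)\<^sup>* \<Longrightarrow> irr X R u \<Longrightarrow> w = u"
  by (erule converse_rtranclE) (auto simp: irr_def)

lemma church_rosser:
  assumes "confluent_rs X R" "(u, v) \<in> (rstep X R \<union> (rstep X R)\<inverse>)\<^sup>*"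
  shows "\<exists>w. (u, w) \<in> (rstep X R)\<^sup>* \<and> (v, w) \<in> (rstep X R)\<^sup>*"
  using assms(2)
proof induction
  case base then show ?case by auto
next
  case (step v v')
  then obtain w where w: "(u, w) \<in> (rstep X R)\<^sup>*" "(v, w) \<in> (rstep X R)\<^sup>*" by auto
  from step(2) show ?case
  proof
    assume s: "(v, v') \<in> rstep X R"
    then obtain w' where "(w, w') \<in> (rstep X R)\<^sup>*" "(v', w') \<in> (rstep X R)\<^sup>*"
      using assms(1) w(2) unfolding confluent_rs_def by blast
    then show ?thesis using w(1) by (meson rtrancl_trans)
  next
    assume "(v, v') \<in> (rstep X R)\<inverse>"
    then have "(v', v) \<in> rstep X R" by auto
    then show ?thesis using w by (meson converse_rtrancl_into_rtrancl)
  qed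
qed


definition good :: "('a, 'm) monoid_scheme \<Rightarrow> 'z set \<Rightarrow> ('z list \<times> 'z list) set \<Rightarrow> ('z list \<Rightarrow> 'a) \<Rightarrow> bool" where
  "good S X R e \<longleftrightarrow> finite X \<and> finite R \<and> rewriting_system X R \<and> noetherian_rs X R \<and>
    (\<forall>w\<in>words_plus X. e w \<in> carrier S) \<and> carrier S \<subseteq> e ` words_plus X \<and>
    (\<forall>u\<in>words_plus X. \<forall>v\<in>words_plus X. e (u @ v) = e u \<otimes>\<^bsub>S\<^esub> e v) \<and>
    (\<forall>(u, v)\<in>R. e u = e v) \<and>
    (\<forall>u\<in>words_plus X. \<forall>v\<in>words_plus X. irr X R u \<longrightarrow> irr X R v \<longrightarrow> e u = e v \<longrightarrow> u = v)"

lemma wp_append: "u \<in> words_plus X \<Longrightarrow> v \<in> words_plus X \<Longrightarrow> u @ v \<in> words_plus X"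
  unfolding words_plus_def by auto

lemma good_step:
  assumes g: "good S X R e" and st: "(u, v) \<in> rstep X R"
  shows "e u = e v"
proof -
  from st obtain w1 u0 v0 w2 where eq: "u = w1 @ u0 @ w2" "v = w1 @ v0 @ w2" and r: "(u0, v0) \<in> R"
    and w: "w1 \<in> lists X" "w2 \<in> lists X" unfolding rstep_def by blast
  have rs: "rewriting_system X R" using g unfolding good_def by auto
  have u0: "u0 \<in> words_plus X" "v0 \<in> words_plus X" using r rs unfolding rewriting_system_def by auto
  have hom: "\<And>a b. a \<in> words_plus X \<Longrightarrow> b \<in> words_plus X \<Longrightarrow> e (a @ b) = e a \<otimes>\<^bsub>S\<^esub> e b"
    using g unfolding good_def by auto
  have ee: "e u0 = e v0" using g r unfolding good_def by auto
  have 1: "e (u0 @ w2) = e (v0 @ w2)"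
  proof (cases "w2 = []")
    case False
    then have "w2 \<in> words_plus X" using w words_plus_def by auto
    then show ?thesis using hom u0 ee by simp
  qed (use ee in simp)
  have 2: "u0 @ w2 \<in> words_plus X" "v0 @ w2 \<in> words_plus X" using u0 w unfolding words_plus_def by auto
  show ?thesis
  proof (cases "w1 = []")
    case False
    then have "w1 \<in> words_plus X" using w words_plus_def by auto
    then show ?thesis using hom 2 1 eq by simp
  qed (use 1 eq in simp)
qed

lemma good_steps:
  assumes g: "good S X R e" and st: "(u, v) \<in> (rstep X R)\<^sup>*"
  shows "e u = e v"
  using st by induction (use good_step[OF g] in auto)

lemma sym_steps_append:
  assumes "(a, a') \<in> (rstep X R \<union> (rstep X R)\<inverse>)\<^sup>*" "c \<in> lists X" "d \<in> lists X"
  shows "(d @ a @ c, d @ a' @ c) \<in> (rstep X R \<union> (rstep X R)\<inverse>)\<^sup>*"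
  using assms(1)
proof induction
  case base then show ?case by auto
next
  case (step y z)
  from step(2) have "(d @ y @ c, d @ z @ c) \<in> rstep X R \<union> (rstep X R)\<inverse>"
    using rstep_ctxt[OF _ assms(3,2)] by auto
  with step(3) show ?case by (rule rtrancl_into_rtrancl)
qed

lemma sym_steps_sym:
  assumes "(a, a') \<in> (r \<union> r\<inverse>)\<^sup>*" shows "(a', a) \<in> (r \<union> r\<inverse>)\<^sup>*"
proof -
  have "(a', a) \<in> ((r \<union> r\<inverse>)\<inverse>)\<^sup>*" using assms by (simp add: rtrancl_converseI)
  moreover have "(r \<union> r\<inverse>)\<inverse> = r \<union> r\<inverse>" by auto
  ultimately show ?thesis by simp
qed

lemma good_cong_iff:
  assumes g: "good S X R e" and u: "u \<in> words_plus X" and v: "v \<in> words_plus X"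
  shows "(u, v) \<in> rs_congruence X R \<longleftrightarrow> e u = e v"
proof
  have rs: "rewriting_system X R" using g unfolding good_def by auto
  assume "(u, v) \<in> rs_congruence X R"
  then have "(u, v) \<in> (rstep X R \<union> (rstep X R)\<inverse>)\<^sup>*" unfolding rs_congruence_def by auto
  then show "e u = e v"
    by induction (use good_step[OF g] in auto)
next
  have rs: "rewriting_system X R" and noe: "noetherian_rs X R" using g unfolding good_def by auto
  assume eq: "e u = e v"
  obtain nu where nu: "(u, nu) \<in> (rstep X R)\<^sup>*" "irr X R nu" using nf_exists[OF noe] by blast
  obtain nv where nv: "(v, nv) \<in> (rstep X R)\<^sup>*" "irr X R nv" using nf_exists[OF noe] by blast
  have w: "nu \<in> words_plus X" "nv \<in> words_plus X" using rsteps_lists[OF rs] nu nv u v by auto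
  have "e nu = e nv" using good_steps[OF g nu(1)] good_steps[OF g nv(1)] eq by simp
  then have "nu = nv" using g w nu nv unfolding good_def by auto
  have "(u, nu) \<in> (rstep X R \<union> (rstep X R)\<inverse>)\<^sup>*" using nu(1) by (rule rtrancl_mono[THEN subsetD, rotated]) auto
  moreover have "(nv, v) \<in> (rstep X R \<union> (rstep X R)\<inverse>)\<^sup>*"
  proof -
    have "(nv, v) \<in> ((rstep X R)\<inverse>)\<^sup>*" using nv(1) by (simp add: rtrancl_converseI)
    then show ?thesis by (rule rtrancl_mono[THEN subsetD, rotated]) auto
  qed
  ultimately show "(u, v) \<in> rs_congruence X R" using \<open>nu = nv\<close> u v
    unfolding rs_congruence_def by auto
qed

lemma good_confluent:
  assumes g: "good S X R e" shows "confluent_rs X R"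
  unfolding confluent_rs_def
proof safe
  fix u v v'
  assume a: "(u, v) \<in> (rstep X R)\<^sup>*" "(u, v') \<in> (rstep X R)\<^sup>*"
  have rs: "rewriting_system X R" and noe: "noetherian_rs X R" using g unfolding good_def by auto
  show "\<exists>w. (v, w) \<in> (rstep X R)\<^sup>* \<and> (v', w) \<in> (rstep X R)\<^sup>*"
  proof (cases "u \<in> words_plus X")
    case True
    obtain n where n: "(v, n) \<in> (rstep X R)\<^sup>*" "irr X R n" using nf_exists[OF noe] by blast
    obtain n' where n': "(v', n') \<in> (rstep X R)\<^sup>*" "irr X R n'" using nf_exists[OF noe] by blast
    have "(u, n) \<in> (rstep X R)\<^sup>*" "(u, n') \<in> (rstep X R)\<^sup>*" using a n n' by auto
    then have "n \<in> words_plus X" "n' \<in> words_plus X" "e n = e n'"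
      using rsteps_lists[OF rs] True good_steps[OF g] by metis+
    then have "n = n'" using g n n' unfolding good_def by auto
    then show ?thesis using n n' by auto
  next
    case False
    then have "irr X R u" unfolding irr_def using rstep_lists[OF rs] by blast
    then show ?thesis using a irr_rtrancl by metis
  qed
qed

lemma good_fcrs:
  fixes X :: "nat set"
  assumes g: "good S X R e"
  shows "defined_by_fcrs S"
proof -
  have rs: "rewriting_system X R" and noe: "noetherian_rs X R" and fin: "finite X" "finite R"
    using g unfolding good_def by auto
  have ecar: "\<And>w. w \<in> words_plus X \<Longrightarrow> e w \<in> carrier S" using g unfolding good_def by auto
  have esurj: "carrier S \<subseteq> e ` words_plus X" using g unfolding good_def by auto
  have hom: "\<And>a b. a \<in> words_plus X \<Longrightarrow> b \<in> words_plus X \<Longrightarrow> e (a @ b) = e a \<otimes>\<^bsub>S\<^esub> e b"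
    using g unfolding good_def by auto
  define h where "h s = {v \<in> words_plus X. e v = s}" for s
  have cls: "rs_congruence X R `` {u} = h (e u)" if "u \<in> words_plus X" for u
    using good_cong_iff[OF g that] that unfolding h_def rs_congruence_def by auto
  have hcar: "h s \<in> carrier (rs_semigroup X R)" if sc: "s \<in> carrier S" for s
  proof -
    obtain u where "u \<in> words_plus X" "s = e u" using esurj sc by auto
    then show ?thesis using cls[of u] quotientI[of u "words_plus X" "rs_congruence X R"]
      unfolding rs_semigroup_def by auto
  qed
  have hne: "\<exists>u. u \<in> h s" if "s \<in> carrier S" for s
    using esurj that unfolding h_def by auto
  have "h \<in> iso S (rs_semigroup X R)"
  proof (rule isoI)
    have mp: "h (x \<otimes>\<^bsub>S\<^esub> y) = h x \<otimes>\<^bsub>rs_semigroup X R\<^esub> h y" if xy: "x \<in> carrier S" "y \<in> carrier S" for x y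
    proof -
      define a where "a = (SOME a. a \<in> h x)"
      define b where "b = (SOME b. b \<in> h y)"
      have ab: "a \<in> h x" "b \<in> h y" unfolding a_def b_def using hne xy by (metis someI)+
      then have abw: "a \<in> words_plus X" "b \<in> words_plus X" "e a = x" "e b = y" unfolding h_def by auto
      have "monoid.mult (rs_semigroup X R) (h x) (h y) = rs_congruence X R `` {a @ b}"
        unfolding rs_semigroup_def a_def b_def by simp
      also have "\<dots> = h (e (a @ b))" using cls wp_append abw by blast
      also have "\<dots> = h (x \<otimes>\<^bsub>S\<^esub> y)" using hom abw by simp
      finally show ?thesis by simp
    qed
    show "h \<in> hom S (rs_semigroup X R)"
      unfolding hom_def using hcar mp by auto
    show "bij_betw h (carrier S) (carrier (rs_semigroup X R))"
      unfolding bij_betw_def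
    proof safe
      show "inj_on h (carrier S)"
      proof (rule inj_onI)
        fix x y assume xy: "x \<in> carrier S" "y \<in> carrier S" "h x = h y"
        obtain u where "u \<in> h x" using hne xy by auto
        then show "x = y" using xy unfolding h_def by auto
      qed
      show "h x \<in> carrier (rs_semigroup X R)" if "x \<in> carrier S" for x using hcar that by auto
      fix C assume "C \<in> carrier (rs_semigroup X R)"
      then obtain u where u: "u \<in> words_plus X" "C = rs_congruence X R `` {u}"
        unfolding rs_semigroup_def by (auto elim!: quotientE)
      then show "C \<in> h ` carrier S" using cls ecar by auto
    qed
  qed
  then have "S \<cong> rs_semigroup X R" by (rule is_isoI)
  moreover have "complete_rs X R" using good_confluent[OF g] noe complete_rs_def by auto
  ultimately show ?thesis unfolding defined_by_fcrs_def using fin rs by blast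
qed


lemma good_of_fcrs:
  assumes sg: "is_semigroup S" and d: "defined_by_fcrs S"
  shows "\<exists>(X::nat set) R e. good S X R e"
proof -
  obtain X :: "nat set" and R where fin: "finite X" "finite R" and rs: "rewriting_system X R"
    and cpl: "complete_rs X R" and iso: "S \<cong> rs_semigroup X R"
    using d unfolding defined_by_fcrs_def by blast
  obtain h where h: "h \<in> iso S (rs_semigroup X R)" using iso unfolding is_iso_def by auto
  define g where "g = inv_into (carrier S) h"
  have gi: "g \<in> iso (rs_semigroup X R) S" unfolding g_def
    using iso_inv_gen[OF h] sg unfolding is_semigroup_def by blast
  let ?C = "rs_congruence X R"
  let ?sym = "(rstep X R \<union> (rstep X R)\<inverse>)\<^sup>*"
  define e where "e w = g (?C `` {w})" for w
  have gcar: "\<And>C. C \<in> carrier (rs_semigroup X R) \<Longrightarrow> g C \<in> carrier S"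
    using gi unfolding iso_def hom_def by auto
  have ghom: "\<And>A B. A \<in> carrier (rs_semigroup X R) \<Longrightarrow> B \<in> carrier (rs_semigroup X R) \<Longrightarrow>
      g (A \<otimes>\<^bsub>rs_semigroup X R\<^esub> B) = g A \<otimes>\<^bsub>S\<^esub> g B"
    using gi unfolding iso_def hom_def by auto
  have gbij: "bij_betw g (carrier (rs_semigroup X R)) (carrier S)" using gi unfolding iso_def by auto
  have incar: "?C `` {w} \<in> carrier (rs_semigroup X R)" if "w \<in> words_plus X" for w
    unfolding rs_semigroup_def using that by (auto intro: quotientI)
  have refl: "w \<in> ?C `` {w}" if "w \<in> words_plus X" for w
    using that unfolding rs_congruence_def by auto
  have clseq: "?C `` {a} = ?C `` {u}" if "(u, a) \<in> ?C" for u a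
  proof -
    have ua: "(u, a) \<in> ?sym" "u \<in> words_plus X" "a \<in> words_plus X" using that unfolding rs_congruence_def by auto
    have au: "(a, u) \<in> ?sym" using sym_steps_sym[OF ua(1)] .
    show ?thesis unfolding set_eq_iff
    proof
      fix x
      have "(a, x) \<in> ?sym \<longleftrightarrow> (u, x) \<in> ?sym"
        using rtrancl_trans[OF ua(1), of x] rtrancl_trans[OF au, of x] by blast
      then show "x \<in> ?C `` {a} \<longleftrightarrow> x \<in> ?C `` {u}" using ua unfolding rs_congruence_def by auto
    qed
  qed
  have "good S X R e"
    unfolding good_def
  proof (intro conjI ballI)
    show "finite X" "finite R" "rewriting_system X R" using fin rs by auto
    show "noetherian_rs X R" using cpl complete_rs_def by auto
    show "e w \<in> carrier S" if "w \<in> words_plus X" for w unfolding e_def using gcar incar that by auto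
    show "carrier S \<subseteq> e ` words_plus X"
    proof
      fix s assume "s \<in> carrier S"
      then obtain C where C: "C \<in> carrier (rs_semigroup X R)" "s = g C" using gbij
        by (metis bij_betw_imp_surj_on imageE)
      then obtain w where "w \<in> words_plus X" "C = ?C `` {w}" unfolding rs_semigroup_def
        by (auto elim!: quotientE)
      then show "s \<in> e ` words_plus X" using C unfolding e_def by auto
    qed
    show "e (u @ v) = e u \<otimes>\<^bsub>S\<^esub> e v" if uv: "u \<in> words_plus X" "v \<in> words_plus X" for u v
    proof -
      define a where "a = (SOME a. a \<in> ?C `` {u})"
      define b where "b = (SOME b. b \<in> ?C `` {v})"
      have ab: "a \<in> ?C `` {u}" "b \<in> ?C `` {v}" unfolding a_def b_def using refl uv by (metis someI)+
      then have abs: "(u, a) \<in> ?sym" "(v, b) \<in> ?sym" "a \<in> words_plus X" "b \<in> words_plus X"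
        unfolding rs_congruence_def by auto
      have l: "u \<in> lists X" "v \<in> lists X" "a \<in> lists X" "b \<in> lists X" using uv abs unfolding words_plus_def by auto
      have "(u @ v, a @ v) \<in> ?sym" using sym_steps_append[OF abs(1) l(2), of "[]"] by simp
      moreover have "(a @ v, a @ b) \<in> ?sym" using sym_steps_append[OF abs(2), of "[]" a] l by simp
      ultimately have "(u @ v, a @ b) \<in> ?sym" by (rule rtrancl_trans)
      then have "(u @ v, a @ b) \<in> ?C" using abs uv wp_append unfolding rs_congruence_def by blast
      then have "?C `` {a @ b} = ?C `` {u @ v}" by (rule clseq)
      moreover have "?C `` {u} \<otimes>\<^bsub>rs_semigroup X R\<^esub> ?C `` {v} = ?C `` {a @ b}"
        unfolding rs_semigroup_def a_def b_def by simp
      ultimately have "?C `` {u @ v} = ?C `` {u} \<otimes>\<^bsub>rs_semigroup X R\<^esub> ?C `` {v}" by simp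
      then have "e (u @ v) = g (?C `` {u} \<otimes>\<^bsub>rs_semigroup X R\<^esub> ?C `` {v})" unfolding e_def by simp
      also have "\<dots> = e u \<otimes>\<^bsub>S\<^esub> e v" unfolding e_def using ghom[OF incar incar] uv by simp
      finally show ?thesis .
    qed
    show "case p of (u, v) \<Rightarrow> e u = e v" if "p \<in> R" for p
    proof (cases p)
      case (Pair u v)
      then have "(u, v) \<in> rstep X R" using rstep_R that by auto
      moreover then have "u \<in> words_plus X" "v \<in> words_plus X" using rstep_lists[OF rs] by auto
      moreover have "(u, v) \<in> ?sym" using calculation(1) by (intro r_into_rtrancl) simp
      ultimately have "(u, v) \<in> ?C" unfolding rs_congruence_def by simp
      then have "?C `` {v} = ?C `` {u}" by (rule clseq)
      then show ?thesis using Pair unfolding e_def by simp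
    qed
    show "irr X R u \<longrightarrow> irr X R v \<longrightarrow> e u = e v \<longrightarrow> u = v"
      if uv: "u \<in> words_plus X" "v \<in> words_plus X" for u v
    proof (intro impI)
      assume iu: "irr X R u" and iv: "irr X R v" and eq: "e u = e v"
      have inj: "inj_on g (carrier (rs_semigroup X R))" using gbij unfolding bij_betw_def by auto
      have "?C `` {u} = ?C `` {v}" using inj_onD[OF inj _ incar incar] eq uv unfolding e_def by blast
      then have "v \<in> ?C `` {u}" using refl uv by auto
      then have "(u, v) \<in> ?sym" unfolding rs_congruence_def by auto
      then obtain w where "(u, w) \<in> (rstep X R)\<^sup>*" "(v, w) \<in> (rstep X R)\<^sup>*"
        using church_rosser cpl complete_rs_def by metis
      then show "u = v" using irr_rtrancl iu iv by metis
    qed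
  qed
  then show ?thesis by blast
qed

lemma good_iso:
  assumes g: "good S X R e" and h: "h \<in> iso S S'"
  shows "good S' X R (h \<circ> e)"
proof -
  have hc: "\<And>a. a \<in> carrier S \<Longrightarrow> h a \<in> carrier S'" and
    hm: "\<And>a b. a \<in> carrier S \<Longrightarrow> b \<in> carrier S \<Longrightarrow> h (a \<otimes>\<^bsub>S\<^esub> b) = h a \<otimes>\<^bsub>S'\<^esub> h b"
    using h unfolding iso_def hom_def by auto
  have hb: "bij_betw h (carrier S) (carrier S')" using h unfolding iso_def by auto
  have ec: "\<And>w. w \<in> words_plus X \<Longrightarrow> e w \<in> carrier S" using g unfolding good_def by auto
  show ?thesis
    unfolding good_def
  proof (intro conjI ballI)
    show "finite X" "finite R" "rewriting_system X R" "noetherian_rs X R" using g unfolding good_def by auto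
    show "(h \<circ> e) w \<in> carrier S'" if "w \<in> words_plus X" for w using hc ec that by auto
    show "carrier S' \<subseteq> (h \<circ> e) ` words_plus X"
    proof
      fix s assume "s \<in> carrier S'"
      then obtain t where "t \<in> carrier S" "s = h t" using hb by (metis bij_betw_imp_surj_on imageE)
      moreover then obtain w where "w \<in> words_plus X" "t = e w" using g unfolding good_def by auto
      ultimately show "s \<in> (h \<circ> e) ` words_plus X" by auto
    qed
    show "(h \<circ> e) (u @ v) = (h \<circ> e) u \<otimes>\<^bsub>S'\<^esub> (h \<circ> e) v" if "u \<in> words_plus X" "v \<in> words_plus X" for u v
      using g that hm ec unfolding good_def by auto
    show "case p of (u, v) \<Rightarrow> (h \<circ> e) u = (h \<circ> e) v" if "p \<in> R" for p
      using g that unfolding good_def by auto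
    show "irr X R u \<longrightarrow> irr X R v \<longrightarrow> (h \<circ> e) u = (h \<circ> e) v \<longrightarrow> u = v"
      if uv: "u \<in> words_plus X" "v \<in> words_plus X" for u v
    proof (intro impI)
      assume "irr X R u" "irr X R v" "(h \<circ> e) u = (h \<circ> e) v"
      moreover then have "e u = e v" using hb ec uv unfolding bij_betw_def inj_on_def by auto
      ultimately show "u = v" using g uv unfolding good_def by auto
    qed
  qed
qed


definition mr :: "('x \<Rightarrow> 'y) \<Rightarrow> ('x list \<times> 'x list) set \<Rightarrow> ('y list \<times> 'y list) set" where
  "mr f R = (\<lambda>(u, v). (map f u, map f v)) ` R"

lemma rstep_map:
  assumes "inj f"
  shows "rstep (f ` Z) (mr f R) = (\<lambda>(a, b). (map f a, map f b)) ` rstep Z R"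
proof (rule equalityI; rule subsetI)
  fix p assume "p \<in> rstep (f ` Z) (mr f R)"
  then obtain w1 u v w2 where p: "p = (w1 @ u @ w2, w1 @ v @ w2)" and r: "(u, v) \<in> mr f R"
    and w: "w1 \<in> lists (f ` Z)" "w2 \<in> lists (f ` Z)" unfolding rstep_def by blast
  from r obtain u0 v0 where r0: "(u0, v0) \<in> R" "u = map f u0" "v = map f v0" unfolding mr_def by auto
  from w obtain w1' w2' where w': "w1' \<in> lists Z" "w2' \<in> lists Z" "w1 = map f w1'" "w2 = map f w2'"
    unfolding lists_image by auto
  have "(w1' @ u0 @ w2', w1' @ v0 @ w2') \<in> rstep Z R" using rstepI[OF r0(1) w'(1,2)] .
  then show "p \<in> (\<lambda>(a, b). (map f a, map f b)) ` rstep Z R"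
    using p r0 w' by (auto intro!: image_eqI[where x="(w1' @ u0 @ w2', w1' @ v0 @ w2')"])
next
  fix p assume "p \<in> (\<lambda>(a, b). (map f a, map f b)) ` rstep Z R"
  then obtain a b where p: "p = (map f a, map f b)" and ab: "(a, b) \<in> rstep Z R" by auto
  then obtain w1 u v w2 where "a = w1 @ u @ w2" "b = w1 @ v @ w2" "(u, v) \<in> R"
    "w1 \<in> lists Z" "w2 \<in> lists Z" unfolding rstep_def by blast
  moreover have "(map f u, map f v) \<in> mr f R" using \<open>(u, v) \<in> R\<close> unfolding mr_def by auto
  moreover have "map f w1 \<in> lists (f ` Z)" "map f w2 \<in> lists (f ` Z)"
    using calculation(4,5) unfolding lists_image by auto
  ultimately show "p \<in> rstep (f ` Z) (mr f R)" using p
    rstepI[of "map f u" "map f v" "mr f R" "map f w1" "f ` Z" "map f w2"] by auto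
qed

lemma good_rename:
  assumes g: "good S Z R e" and f: "inj f"
  shows "good S (f ` Z) (mr f R) (e \<circ> map (inv_into UNIV f))"
proof -
  have invm: "map (inv_into UNIV f) (map f w) = w" for w using f by (simp add: map_idI)
  have injm: "inj (map f)" using f by (simp add: inj_mapI)
  have wp: "words_plus (f ` Z) = map f ` words_plus Z"
    unfolding words_plus_def lists_image by auto
  have rs: "rstep (f ` Z) (mr f R) = (\<lambda>(a, b). (map f a, map f b)) ` rstep Z R" using rstep_map[OF f] .
  have irrm: "irr (f ` Z) (mr f R) (map f u) \<longleftrightarrow> irr Z R u" for u
  proof -
    have "(\<exists>v. (map f u, v) \<in> rstep (f ` Z) (mr f R)) \<longleftrightarrow> (\<exists>v. (u, v) \<in> rstep Z R)"
      unfolding rs using injm by (auto dest: injD)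
    then show ?thesis unfolding irr_def by simp
  qed
  show ?thesis
    unfolding good_def
  proof (intro conjI ballI)
    show "finite (f ` Z)" "finite (mr f R)" using g unfolding good_def mr_def by auto
    show "rewriting_system (f ` Z) (mr f R)"
    proof -
      have "rewriting_system Z R" using g unfolding good_def by blast
      then show ?thesis unfolding rewriting_system_def mr_def words_plus_def lists_image by auto
    qed
    show "noetherian_rs (f ` Z) (mr f R)"
      unfolding noetherian_rs_def
    proof
      assume "\<exists>h::nat \<Rightarrow> _. \<forall>i. (h i, h (Suc i)) \<in> rstep (f ` Z) (mr f R)"
      then obtain h :: "nat \<Rightarrow> _" where h: "\<forall>i. (h i, h (Suc i)) \<in> rstep (f ` Z) (mr f R)" by blast
      have "(map (inv_into UNIV f) (h i), map (inv_into UNIV f) (h (Suc i))) \<in> rstep Z R" for i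
        using h[rule_format, of i] unfolding rs by (auto simp: invm inv_o_cancel[OF f])
      then have "\<exists>k. \<forall>i. (k i, k (Suc i)) \<in> rstep Z R"
        by (intro exI[of _ "\<lambda>i. map (inv_into UNIV f) (h i)"]) blast
      moreover have "noetherian_rs Z R" using g unfolding good_def by blast
      ultimately show False unfolding noetherian_rs_def by blast
    qed
    have ec: "\<forall>w\<in>words_plus Z. e w \<in> carrier S" and es: "carrier S \<subseteq> e ` words_plus Z"
      and eh: "\<forall>u\<in>words_plus Z. \<forall>v\<in>words_plus Z. e (u @ v) = e u \<otimes>\<^bsub>S\<^esub> e v"
      and er: "\<forall>(u, v)\<in>R. e u = e v"
      and eu: "\<forall>u\<in>words_plus Z. \<forall>v\<in>words_plus Z. irr Z R u \<longrightarrow> irr Z R v \<longrightarrow> e u = e v \<longrightarrow> u = v"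
      using g unfolding good_def by blast+
    show "(e \<circ> map (inv_into UNIV f)) w \<in> carrier S" if ww: "w \<in> words_plus (f ` Z)" for w
    proof -
      obtain w0 where "w0 \<in> words_plus Z" "w = map f w0" using ww unfolding wp by auto
      then show ?thesis using ec by (simp add: invm inv_o_cancel[OF f])
    qed
    show "carrier S \<subseteq> (e \<circ> map (inv_into UNIV f)) ` words_plus (f ` Z)"
    proof
      fix s assume "s \<in> carrier S"
      then obtain w0 where w0: "w0 \<in> words_plus Z" "s = e w0" using es by auto
      then have "map f w0 \<in> words_plus (f ` Z)" "s = (e \<circ> map (inv_into UNIV f)) (map f w0)"
        unfolding wp by (auto simp: invm inv_o_cancel[OF f])
      then show "s \<in> (e \<circ> map (inv_into UNIV f)) ` words_plus (f ` Z)" by blast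
    qed
    show "(e \<circ> map (inv_into UNIV f)) (u @ v) = (e \<circ> map (inv_into UNIV f)) u \<otimes>\<^bsub>S\<^esub> (e \<circ> map (inv_into UNIV f)) v"
      if uv: "u \<in> words_plus (f ` Z)" "v \<in> words_plus (f ` Z)" for u v
    proof -
      obtain u0 v0 where "u0 \<in> words_plus Z" "u = map f u0" "v0 \<in> words_plus Z" "v = map f v0"
        using uv unfolding wp by auto
      then show ?thesis using eh by (simp add: invm inv_o_cancel[OF f] flip: map_append)
    qed
    show "case p of (u, v) \<Rightarrow> (e \<circ> map (inv_into UNIV f)) u = (e \<circ> map (inv_into UNIV f)) v" if pp: "p \<in> mr f R" for p
    proof -
      obtain u0 v0 where "(u0, v0) \<in> R" "p = (map f u0, map f v0)" using pp unfolding mr_def by auto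
      then show ?thesis using er by (auto simp: invm inv_o_cancel[OF f])
    qed
    show "irr (f ` Z) (mr f R) u \<longrightarrow> irr (f ` Z) (mr f R) v \<longrightarrow>
        (e \<circ> map (inv_into UNIV f)) u = (e \<circ> map (inv_into UNIV f)) v \<longrightarrow> u = v"
      if uv: "u \<in> words_plus (f ` Z)" "v \<in> words_plus (f ` Z)" for u v
    proof -
      obtain u0 v0 where "u0 \<in> words_plus Z" "u = map f u0" "v0 \<in> words_plus Z" "v = map f v0"
        using uv unfolding wp by auto
      then show ?thesis using eu by (simp add: invm irrm inv_o_cancel[OF f]) blast
    qed
  qed
qed

lemma good_fcrs_countable:
  fixes Z :: "'z::countable set"
  assumes "good S Z R e"
  shows "defined_by_fcrs S"
  using good_fcrs[OF good_rename[OF assms inj_to_nat]] .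


fun sp :: "('z \<Rightarrow> 'b option) \<Rightarrow> 'z list \<Rightarrow> 'b list list" where
  "sp f [] = [[]]"
| "sp f (z # w) = (case f z of None \<Rightarrow> [] # sp f w | Some b \<Rightarrow> (b # hd (sp f w)) # tl (sp f w))"

lemma sp_ne [simp]: "sp f w \<noteq> []"
  by (cases w) (auto split: option.splits)

lemma sp_append: "sp f (a @ b) = butlast (sp f a) @ [last (sp f a) @ hd (sp f b)] @ tl (sp f b)"
proof (induction a)
  case Nil then show ?case by simp
next
  case (Cons z a)
  obtain s0 rest where sa: "sp f a = s0 # rest" using sp_ne by (metis list.exhaust)
  show ?case
  proof (cases "f z")
    case None
    then show ?thesis using Cons sa by simp
  next
    case (Some y)
    then show ?thesis using Cons sa by (cases rest) auto
  qed
qed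

lemma sp_all_some: "(\<forall>z\<in>set u. f z \<noteq> None) \<Longrightarrow> sp f u = [map (the \<circ> f) u]"
  by (induction u) (auto split: option.splits)

lemma sp_all_none: "(\<forall>z\<in>set u. f z = None) \<Longrightarrow> sp f u = replicate (Suc (length u)) []"
  by (induction u) auto

lemma sp_sets: "b \<in> set (sp f w) \<Longrightarrow> set b \<subseteq> {x. \<exists>z\<in>set w. f z = Some x}"
proof (induction w arbitrary: b)
  case Nil then show ?case by simp
next
  case (Cons z w)
  obtain s0 rest where sa: "sp f w = s0 # rest" using sp_ne by (metis list.exhaust)
  show ?case
  proof (cases "f z")
    case None
    then show ?thesis using Cons sa by fastforce
  next
    case (Some y)
    then have "b = y # s0 \<or> b \<in> set rest" using Cons.prems sa by auto
    then show ?thesis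
    proof
      assume "b = y # s0"
      then show ?thesis using Cons.IH[of s0] sa Some by fastforce
    next
      assume "b \<in> set rest"
      then show ?thesis using Cons.IH[of b] sa by fastforce
    qed
  qed
qed

lemma sp_ctx_some:
  assumes "\<forall>z\<in>set u. f z \<noteq> None"
  shows "sp f (w1 @ u @ w2) = butlast (sp f w1) @ [last (sp f w1) @ map (the \<circ> f) u @ hd (sp f w2)] @ tl (sp f w2)"
  using assms by (simp add: sp_append[of f w1] sp_append[of f u] sp_all_some)

lemma sp_ctx_none:
  assumes "\<forall>z\<in>set u. f z = None" "u \<noteq> []"
  shows "sp f (w1 @ u @ w2) = butlast (sp f w1) @ [last (sp f w1)] @ replicate (length u - 1) [] @ [hd (sp f w2)] @ tl (sp f w2)"
proof -
  obtain n where n: "length u = Suc n" using assms(2) by (cases u) auto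
  have br: "[] # butlast (replicate m []) = replicate m []" if "0 < m" for m :: nat
    using that by (induction m) (auto simp: butlast_append)
  show ?thesis using assms(1) n br
    by (auto simp add: sp_append[of f w1] sp_append[of f u] sp_all_none butlast_append)
qed

lemma sp_ctx_ns:
  assumes "f z1 = None" "f z2 = Some y"
  shows "sp f (w1 @ [z1, z2] @ w2) = butlast (sp f w1) @ [last (sp f w1)] @ [y # hd (sp f w2)] @ tl (sp f w2)"
  using assms by (simp add: sp_append[of f w1])

lemma sp_ctx_sn:
  assumes "f z1 = Some y" "f z2 = None"
  shows "sp f (w1 @ [z1, z2] @ w2) = butlast (sp f w1) @ [last (sp f w1) @ [y]] @ [hd (sp f w2)] @ tl (sp f w2)"
  using assms by (simp add: sp_append[of f w1])

definition rY :: "'y set \<Rightarrow> ('y list \<times> 'y list) set \<Rightarrow> ('y list \<times> 'y list) set" where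
  "rY Y Q = {(b, a). (a, b) \<in> rstep Y Q} \<union> {(b, a). a \<in> lists Y \<and> (\<exists>p q. a = p @ b @ q \<and> p @ q \<noteq> [])}"

lemma wf_rY:
  assumes noe: "noetherian_rs Y Q" and rsQ: "rewriting_system Y Q"
  shows "wf (rY Y Q)"
proof -
  have wfQ: "wf ((rstep Y Q)\<inverse>)" using noe noeth_wf by auto
  have main: "\<forall>B p q. C = p @ B @ q \<longrightarrow> B \<in> Wellfounded.acc (rY Y Q)" if "C \<in> lists Y" for C
    using that
  proof (induction C rule: wf_induct[OF wfQ])
    case (1 C)
    show ?case
    proof (intro allI impI)
      fix B p q assume Cdef: "C = p @ B @ q"
      show "B \<in> Wellfounded.acc (rY Y Q)"
        using Cdef
      proof (induction "length B" arbitrary: B p q rule: less_induct)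
        case less
        show ?case
        proof (rule accI)
          fix B' assume "(B', B) \<in> rY Y Q"
          then consider "(B, B') \<in> rstep Y Q" | p' q' where "B \<in> lists Y" "B = p' @ B' @ q'" "p' @ q' \<noteq> []"
            unfolding rY_def by blast
          then show "B' \<in> Wellfounded.acc (rY Y Q)"
          proof cases
            case 1
            have pq: "p \<in> lists Y" "q \<in> lists Y" using \<open>C \<in> lists Y\<close> less.prems by auto
            have "(C, p @ B' @ q) \<in> rstep Y Q" using rstep_ctxt[OF 1 pq] less.prems by simp
            moreover have "p @ B' @ q \<in> lists Y" using pq rstep_lists[OF rsQ 1] unfolding words_plus_def by auto
            ultimately show ?thesis using "1.IH" by blast
          next
            case 2
            then have "length B' < length B" by auto
            moreover have "C = (p @ p') @ B' @ (q' @ q)" using less.prems 2 by simp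
            ultimately show ?thesis using less.hyps by blast
          qed
        qed
      qed
    qed
  qed
  show ?thesis
  proof (rule acc_wfI, rule allI)
    fix B
    show "B \<in> Wellfounded.acc (rY Y Q)"
    proof (cases "B \<in> lists Y")
      case True
      then show ?thesis using main[OF True] by (metis append.left_neutral append_Nil2)
    next
      case False
      show ?thesis
      proof (rule accI)
        fix B' assume "(B', B) \<in> rY Y Q"
        then show "B' \<in> Wellfounded.acc (rY Y Q)" using False rstep_lists[OF rsQ, of B B']
          unfolding rY_def words_plus_def by auto
      qed
    qed
  qed
qed


fun ev :: "('a, 'm) monoid_scheme \<Rightarrow> ('z \<Rightarrow> 'a) \<Rightarrow> 'z list \<Rightarrow> 'a" where
  "ev S f [] = undefined"
| "ev S f [z] = f z"
| "ev S f (z # z' # w) = f z \<otimes>\<^bsub>S\<^esub> ev S f (z' # w)"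

lemma ev_cons: "w \<noteq> [] \<Longrightarrow> ev S f (z # w) = f z \<otimes>\<^bsub>S\<^esub> ev S f w"
  by (cases w) auto

lemma ev_map: "ev S f (map g w) = ev S (f \<circ> g) w"
proof (induction w)
  case (Cons z w) then show ?case by (cases w) auto
qed simp

lemma ev_car:
  assumes "is_semigroup S" "w \<noteq> []" "\<forall>z\<in>set w. f z \<in> carrier S"
  shows "ev S f w \<in> carrier S"
  using assms(2,3)
proof (induction w)
  case (Cons z w)
  then show ?case using assms(1) unfolding is_semigroup_def by (cases w) auto
qed simp

lemma ev_append:
  assumes sg: "is_semigroup S" and "a \<noteq> []" "b \<noteq> []" "\<forall>z\<in>set a. f z \<in> carrier S" "\<forall>z\<in>set b. f z \<in> carrier S"
  shows "ev S f (a @ b) = ev S f a \<otimes>\<^bsub>S\<^esub> ev S f b"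
  using assms(2-5)
proof (induction a)
  case (Cons z a)
  show ?case
  proof (cases "a = []")
    case True then show ?thesis using Cons by (simp add: ev_cons)
  next
    case False
    have "ev S f (z # a @ b) = f z \<otimes>\<^bsub>S\<^esub> (ev S f a \<otimes>\<^bsub>S\<^esub> ev S f b)"
      using Cons False by (simp add: ev_cons)
    also have "\<dots> = (f z \<otimes>\<^bsub>S\<^esub> ev S f a) \<otimes>\<^bsub>S\<^esub> ev S f b"
      using sg ev_car[OF sg False] ev_car[OF sg Cons.prems(2)] Cons.prems unfolding is_semigroup_def
      by (metis list.set_intros(1) list.set_intros(2))
    finally show ?thesis using False by (simp add: ev_cons)
  qed
qed simp

locale ext =
  fixes S :: "'a monoid" and T' :: "'a set" and X :: "nat set" and R :: "(nat list \<times> nat list) set"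
    and eT :: "nat list \<Rightarrow> 'a" and Y :: "nat set" and Q :: "(nat list \<times> nat list) set"
    and eU :: "nat list \<Rightarrow> 'a set"
  assumes sg: "is_semigroup S" and idl: "semigroup_ideal T' S"
    and gT: "good \<lparr>carrier = T', mult = mult S, one = one S\<rparr> X R eT"
    and gU: "good (rees_quotient S T') Y Q eU"
begin

lemma closed: "a \<in> carrier S \<Longrightarrow> b \<in> carrier S \<Longrightarrow> a \<otimes>\<^bsub>S\<^esub> b \<in> carrier S"
  using sg unfolding is_semigroup_def by auto

lemma T'sub: "T' \<subseteq> carrier S" and T'ne: "T' \<noteq> {}"
  and idL: "s \<in> carrier S \<Longrightarrow> t \<in> T' \<Longrightarrow> s \<otimes>\<^bsub>S\<^esub> t \<in> T'"
  and idR: "s \<in> carrier S \<Longrightarrow> t \<in> T' \<Longrightarrow> t \<otimes>\<^bsub>S\<^esub> s \<in> T'"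
  using idl unfolding semigroup_ideal_def by auto

lemma rc_T: "rees_class T' s = T' \<Longrightarrow> s \<in> T'"
  unfolding rees_class_def by (auto split: if_splits)

lemma rc_inj: "s \<notin> T' \<Longrightarrow> rees_class T' t = rees_class T' s \<Longrightarrow> t = s"
  unfolding rees_class_def by (auto split: if_splits)

lemma rc_sub: "s \<in> carrier S \<Longrightarrow> rees_class T' s \<subseteq> carrier S"
  using T'sub unfolding rees_class_def by auto

lemma rc_ne: "\<exists>a. a \<in> rees_class T' s"
  using T'ne unfolding rees_class_def by auto

lemma rees_mult:
  assumes "s \<in> carrier S" "t \<in> carrier S"
  shows "rees_class T' s \<otimes>\<^bsub>rees_quotient S T'\<^esub> rees_class T' t = rees_class T' (s \<otimes>\<^bsub>S\<^esub> t)"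
proof -
  define a where "a = (SOME a. a \<in> rees_class T' s)"
  define b where "b = (SOME b. b \<in> rees_class T' t)"
  have a: "a \<in> rees_class T' s" unfolding a_def using rc_ne by (metis someI)
  have b: "b \<in> rees_class T' t" unfolding b_def using rc_ne by (metis someI)
  have ac: "a \<in> carrier S" "b \<in> carrier S" using a b rc_sub assms by auto
  have m: "rees_class T' s \<otimes>\<^bsub>rees_quotient S T'\<^esub> rees_class T' t = rees_class T' (a \<otimes>\<^bsub>S\<^esub> b)"
    unfolding rees_quotient_def a_def b_def by simp
  show ?thesis
  proof (cases "s \<in> T' \<or> t \<in> T'")
    case True
    then have "a \<in> T' \<or> b \<in> T'" using a b unfolding rees_class_def by auto
    then have "a \<otimes>\<^bsub>S\<^esub> b \<in> T'" using idL idR ac by auto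
    moreover have "s \<otimes>\<^bsub>S\<^esub> t \<in> T'" using True idL idR assms by auto
    ultimately show ?thesis using m unfolding rees_class_def by simp
  next
    case False
    then have "a = s" "b = t" using a b unfolding rees_class_def by auto
    then show ?thesis using m by simp
  qed
qed

lemma rees_closed:
  assumes "A \<in> carrier (rees_quotient S T')" "B \<in> carrier (rees_quotient S T')"
  shows "A \<otimes>\<^bsub>rees_quotient S T'\<^esub> B \<in> carrier (rees_quotient S T')"
proof -
  obtain s t where "s \<in> carrier S" "t \<in> carrier S" "A = rees_class T' s" "B = rees_class T' t"
    using assms unfolding rees_quotient_def by auto
  then show ?thesis using rees_mult closed unfolding rees_quotient_def by auto
qed

lemma T_facts:
  shows eT_car: "w \<in> words_plus X \<Longrightarrow> eT w \<in> T'"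
    and eT_surj: "T' \<subseteq> eT ` words_plus X"
    and eT_hom: "u \<in> words_plus X \<Longrightarrow> v \<in> words_plus X \<Longrightarrow> eT (u @ v) = eT u \<otimes>\<^bsub>S\<^esub> eT v"
    and eT_uniq: "u \<in> words_plus X \<Longrightarrow> v \<in> words_plus X \<Longrightarrow> irr X R u \<Longrightarrow> irr X R v \<Longrightarrow> eT u = eT v \<Longrightarrow> u = v"
    and finX: "finite X" and finR: "finite R" and rsR: "rewriting_system X R" and noeR: "noetherian_rs X R"
  using gT unfolding good_def by auto

lemma U_facts:
  shows eU_car: "w \<in> words_plus Y \<Longrightarrow> eU w \<in> rees_class T' ` carrier S"
    and eU_surj: "rees_class T' ` carrier S \<subseteq> eU ` words_plus Y"
    and eU_hom: "u \<in> words_plus Y \<Longrightarrow> v \<in> words_plus Y \<Longrightarrow> eU (u @ v) = eU u \<otimes>\<^bsub>rees_quotient S T'\<^esub> eU v"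
    and eU_uniq: "u \<in> words_plus Y \<Longrightarrow> v \<in> words_plus Y \<Longrightarrow> irr Y Q u \<Longrightarrow> irr Y Q v \<Longrightarrow> eU u = eU v \<Longrightarrow> u = v"
    and finY: "finite Y" and finQ: "finite Q" and rsQ: "rewriting_system Y Q" and noeQ: "noetherian_rs Y Q"
  using gU unfolding good_def rees_quotient_def by auto

definition phi :: "nat \<Rightarrow> 'a" where
  "phi y = (SOME s. s \<in> carrier S \<and> rees_class T' s = eU [y])"

lemma phi: "y \<in> Y \<Longrightarrow> phi y \<in> carrier S \<and> rees_class T' (phi y) = eU [y]"
proof -
  assume "y \<in> Y"
  then have "[y] \<in> words_plus Y" unfolding words_plus_def by auto
  then have "\<exists>s. s \<in> carrier S \<and> rees_class T' s = eU [y]" using eU_car by force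
  then show ?thesis unfolding phi_def by (rule someI_ex)
qed

lemma eT_ev: "w \<in> words_plus X \<Longrightarrow> eT w = ev S (\<lambda>x. eT [x]) w"
proof (induction w)
  case (Cons x w)
  show ?case
  proof (cases "w = []")
    case False
    then have "w \<in> words_plus X" "[x] \<in> words_plus X" using Cons.prems unfolding words_plus_def by auto
    then show ?thesis using eT_hom[of "[x]" w] Cons False by (simp add: ev_cons)
  qed simp
qed (simp add: words_plus_def)

lemma eU_ev: "w \<in> words_plus Y \<Longrightarrow> eU w = rees_class T' (ev S phi w)"
proof (induction w)
  case (Cons y w)
  have y: "y \<in> Y" using Cons.prems unfolding words_plus_def by auto
  show ?case
  proof (cases "w = []")
    case True then show ?thesis using phi[OF y] by simp
  next
    case False
    then have w: "w \<in> words_plus Y" "[y] \<in> words_plus Y" using Cons.prems unfolding words_plus_def by auto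
    have wc: "ev S phi w \<in> carrier S" using ev_car[OF sg False] phi w unfolding words_plus_def by auto
    have py: "eU [y] = rees_class T' (phi y)" "phi y \<in> carrier S" using phi[OF y] by auto
    have "eU (y # w) = eU [y] \<otimes>\<^bsub>rees_quotient S T'\<^esub> eU w" using eU_hom[OF w(2) w(1)] by simp
    also have "\<dots> = rees_class T' (phi y \<otimes>\<^bsub>S\<^esub> ev S phi w)" using Cons.IH w py rees_mult[OF py(2) wc] by simp
    finally show ?thesis using False by (simp add: ev_cons)
  qed
qed (simp add: words_plus_def)

lemma ev_phi_car: "w \<in> words_plus Y \<Longrightarrow> ev S phi w \<in> carrier S"
  using ev_car[OF sg] phi unfolding words_plus_def by auto

lemma eU_zero: "w \<in> words_plus Y \<Longrightarrow> eU w = T' \<Longrightarrow> ev S phi w \<in> T'"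
  using eU_ev rc_T by metis

lemma eU_nonzero: "w \<in> words_plus Y \<Longrightarrow> eU w \<noteq> T' \<Longrightarrow> ev S phi w \<notin> T'"
  using eU_ev unfolding rees_class_def by auto

definition wT :: "'a \<Rightarrow> nat list" where
  "wT t = (SOME w. w \<in> words_plus X \<and> eT w = t)"

lemma wT: "t \<in> T' \<Longrightarrow> wT t \<in> words_plus X \<and> eT (wT t) = t"
proof -
  assume "t \<in> T'"
  then have "\<exists>w. w \<in> words_plus X \<and> eT w = t" using eT_surj by force
  then show ?thesis unfolding wT_def by (rule someI_ex)
qed

definition z0 :: "nat list" where
  "z0 = (SOME w. w \<in> words_plus Y \<and> eU w = T' \<and> irr Y Q w)"

lemma z0: "z0 \<in> words_plus Y \<and> eU z0 = T' \<and> irr Y Q z0"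
proof -
  obtain t where t: "t \<in> T'" using T'ne by auto
  then have "T' = rees_class T' t" "t \<in> carrier S" unfolding rees_class_def using T'sub by auto
  then obtain w0 where w0: "w0 \<in> words_plus Y" "eU w0 = T'" using eU_surj by force
  obtain n where n: "(w0, n) \<in> (rstep Y Q)\<^sup>*" "irr Y Q n" using nf_exists[OF noeQ] by blast
  have "n \<in> words_plus Y" using rsteps_lists[OF rsQ n(1) w0(1)] .
  moreover have "eU n = T'" using good_steps[OF gU n(1)] w0 by simp
  ultimately have "\<exists>w. w \<in> words_plus Y \<and> eU w = T' \<and> irr Y Q w" using n(2) by blast
  then show ?thesis unfolding z0_def by (rule someI_ex)
qed

definition Z :: "(nat + nat) set" where "Z = Inl ` X \<union> Inr ` Y"

definition val :: "nat + nat \<Rightarrow> 'a" where "val = case_sum (\<lambda>x. eT [x]) phi"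

definition E :: "(nat + nat) list \<Rightarrow> 'a" where "E = ev S val"

lemma val_car: "z \<in> Z \<Longrightarrow> val z \<in> carrier S"
  using phi eT_car T'sub unfolding Z_def val_def words_plus_def by auto

lemma E_Inl: "w \<in> words_plus X \<Longrightarrow> E (map Inl w) = eT w"
  unfolding E_def by (simp add: ev_map eT_ev val_def comp_def)

lemma E_Inr: "w \<in> words_plus Y \<Longrightarrow> E (map Inr w) = ev S phi w"
  unfolding E_def by (simp add: ev_map val_def comp_def)

lemma E_car: "w \<in> words_plus Z \<Longrightarrow> E w \<in> carrier S"
  unfolding E_def using ev_car[OF sg] val_car unfolding words_plus_def by auto

lemma E_hom: "u \<in> words_plus Z \<Longrightarrow> v \<in> words_plus Z \<Longrightarrow> E (u @ v) = E u \<otimes>\<^bsub>S\<^esub> E v"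
  unfolding E_def words_plus_def using val_car by (intro ev_append[OF sg]) auto

end


context ext
begin

definition R1 where "R1 = mr Inl R"
definition R2 where "R2 = {(map Inr u, map Inr v) | u v. (u, v) \<in> Q \<and> eU u \<noteq> T'}"
definition R3 where "R3 = {(map Inr u, map Inl (wT (ev S phi u))) | u. (u \<in> fst ` Q \<or> u = z0) \<and> eU u = T'}"
definition R4a where "R4a = {([Inl x, Inr y], map Inl (wT (eT [x] \<otimes>\<^bsub>S\<^esub> phi y))) | x y. x \<in> X \<and> y \<in> Y}"
definition R4b where "R4b = {([Inr y, Inl x], map Inl (wT (phi y \<otimes>\<^bsub>S\<^esub> eT [x]))) | x y. x \<in> X \<and> y \<in> Y}"
definition Rz where "Rz = R1 \<union> R2 \<union> R3 \<union> R4a \<union> R4b"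

lemma Q_wp: "(u, v) \<in> Q \<Longrightarrow> u \<in> words_plus Y \<and> v \<in> words_plus Y"
  using rsQ unfolding rewriting_system_def by auto

lemma R_wp: "(u, v) \<in> R \<Longrightarrow> u \<in> words_plus X \<and> v \<in> words_plus X"
  using rsR unfolding rewriting_system_def by auto

lemma wp_Inl: "w \<in> words_plus X \<Longrightarrow> map Inl w \<in> words_plus Z"
  unfolding words_plus_def Z_def by auto

lemma wp_Inr: "w \<in> words_plus Y \<Longrightarrow> map Inr w \<in> words_plus Z"
  unfolding words_plus_def Z_def by auto

lemma finite_Rz: "finite Rz"
proof -
  have "finite R1" unfolding R1_def mr_def using finR by auto
  moreover have "R2 \<subseteq> (\<lambda>(u, v). (map Inr u, map Inr v)) ` Q" unfolding R2_def by auto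
  then have "finite R2" using finQ finite_subset by blast
  moreover have "R3 \<subseteq> (\<lambda>u. (map Inr u, map Inl (wT (ev S phi u)))) ` (fst ` Q \<union> {z0})" unfolding R3_def by auto
  then have "finite R3" using finQ finite_subset by blast
  moreover have eq: "R4a = (\<lambda>(x, y). ([Inl x, Inr y], map Inl (wT (eT [x] \<otimes>\<^bsub>S\<^esub> phi y)))) ` (X \<times> Y)"
    unfolding R4a_def by auto
  have "finite R4a" unfolding eq by (intro finite_imageI finite_cartesian_product finX finY)
  moreover have eq: "R4b = (\<lambda>(x, y). ([Inr y, Inl x], map Inl (wT (phi y \<otimes>\<^bsub>S\<^esub> eT [x])))) ` (X \<times> Y)"
    unfolding R4b_def by auto
  have "finite R4b" unfolding eq by (intro finite_imageI finite_cartesian_product finX finY)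
  ultimately show ?thesis unfolding Rz_def by simp
qed

lemma x_wp: "x \<in> X \<Longrightarrow> [x] \<in> words_plus X" and y_wp: "y \<in> Y \<Longrightarrow> [y] \<in> words_plus Y"
  unfolding words_plus_def by auto

lemma R4a_T: "x \<in> X \<Longrightarrow> y \<in> Y \<Longrightarrow> eT [x] \<otimes>\<^bsub>S\<^esub> phi y \<in> T'"
  using idR phi eT_car x_wp by blast

lemma R4b_T: "x \<in> X \<Longrightarrow> y \<in> Y \<Longrightarrow> phi y \<otimes>\<^bsub>S\<^esub> eT [x] \<in> T'"
  using idL phi eT_car x_wp by blast

lemma R3_T: "(u \<in> fst ` Q \<or> u = z0) \<Longrightarrow> eU u = T' \<Longrightarrow> u \<in> words_plus Y \<and> ev S phi u \<in> T'"
  using Q_wp z0 eU_zero by force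

lemma rs_Rz: "rewriting_system Z Rz"
  unfolding rewriting_system_def
proof (intro ballI)
  fix p assume "p \<in> Rz"
  then consider "p \<in> R1" | "p \<in> R2" | "p \<in> R3" | "p \<in> R4a" | "p \<in> R4b" unfolding Rz_def by blast
  then show "case p of (u, v) \<Rightarrow> u \<in> words_plus Z \<and> v \<in> words_plus Z"
  proof cases
    case 1 then show ?thesis unfolding R1_def mr_def using R_wp wp_Inl by auto
  next
    case 2 then show ?thesis unfolding R2_def using Q_wp wp_Inr by auto
  next
    case 3 then show ?thesis unfolding R3_def using R3_T wp_Inr wp_Inl wT by auto
  next
    case 4
    then obtain x y where p: "x \<in> X" "y \<in> Y" "p = ([Inl x, Inr y], map Inl (wT (eT [x] \<otimes>\<^bsub>S\<^esub> phi y)))"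
      unfolding R4a_def by auto
    then have "map Inl (wT (eT [x] \<otimes>\<^bsub>S\<^esub> phi y)) \<in> words_plus Z" using R4a_T wp_Inl wT by auto
    moreover have "[Inl x, Inr y] \<in> words_plus Z" using p unfolding words_plus_def Z_def by auto
    ultimately show ?thesis using p by simp
  next
    case 5
    then obtain x y where p: "x \<in> X" "y \<in> Y" "p = ([Inr y, Inl x], map Inl (wT (phi y \<otimes>\<^bsub>S\<^esub> eT [x])))"
      unfolding R4b_def by auto
    then have "map Inl (wT (phi y \<otimes>\<^bsub>S\<^esub> eT [x])) \<in> words_plus Z" using R4b_T wp_Inl wT by auto
    moreover have "[Inr y, Inl x] \<in> words_plus Z" using p unfolding words_plus_def Z_def by auto
    ultimately show ?thesis using p by simp
  qed
qed

lemma E_pair: "E [a, b] = val a \<otimes>\<^bsub>S\<^esub> val b"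
  unfolding E_def by simp

lemma rules_E: "(u, v) \<in> Rz \<Longrightarrow> E u = E v"
proof -
  assume "(u, v) \<in> Rz"
  then consider "(u, v) \<in> R1" | "(u, v) \<in> R2" | "(u, v) \<in> R3" | "(u, v) \<in> R4a" | "(u, v) \<in> R4b" unfolding Rz_def by blast
  then show "E u = E v"
  proof cases
    case 1
    then obtain u0 v0 where uv: "(u0, v0) \<in> R" "u = map Inl u0" "v = map Inl v0" unfolding R1_def mr_def by auto
    have "eT u0 = eT v0" using gT uv(1) unfolding good_def by auto
    then show ?thesis using uv R_wp E_Inl by auto
  next
    case 2
    then obtain u0 v0 where uv: "(u0, v0) \<in> Q" "u = map Inr u0" "v = map Inr v0" "eU u0 \<noteq> T'"
      unfolding R2_def by auto
    have w: "u0 \<in> words_plus Y" "v0 \<in> words_plus Y" using Q_wp uv by auto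
    have "eU u0 = eU v0" using gU uv(1) unfolding good_def by auto
    then have "rees_class T' (ev S phi v0) = rees_class T' (ev S phi u0)" using eU_ev w by simp
    then have "ev S phi v0 = ev S phi u0" using rc_inj eU_nonzero[OF w(1) uv(4)] by blast
    then show ?thesis using uv E_Inr w by simp
  next
    case 3
    then obtain u0 where uv: "u0 \<in> fst ` Q \<or> u0 = z0" "eU u0 = T'" "u = map Inr u0"
      "v = map Inl (wT (ev S phi u0))" unfolding R3_def by auto
    have "u0 \<in> words_plus Y" "ev S phi u0 \<in> T'" using R3_T uv by auto
    then show ?thesis using uv E_Inr E_Inl wT by simp
  next
    case 4
    then obtain x y where uv: "x \<in> X" "y \<in> Y" "u = [Inl x, Inr y]" "v = map Inl (wT (eT [x] \<otimes>\<^bsub>S\<^esub> phi y))"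
      unfolding R4a_def by auto
    then show ?thesis using E_pair E_Inl wT R4a_T by (simp add: val_def)
  next
    case 5
    then obtain x y where uv: "x \<in> X" "y \<in> Y" "u = [Inr y, Inl x]" "v = map Inl (wT (phi y \<otimes>\<^bsub>S\<^esub> eT [x]))"
      unfolding R4b_def by auto
    then show ?thesis using E_pair E_Inl wT R4b_T by (simp add: val_def)
  qed
qed

lemma E_surj: "carrier S \<subseteq> E ` words_plus Z"
proof
  fix s assume s: "s \<in> carrier S"
  show "s \<in> E ` words_plus Z"
  proof (cases "s \<in> T'")
    case True
    then obtain w where "w \<in> words_plus X" "eT w = s" using eT_surj by auto
    then show ?thesis using E_Inl wp_Inl by (metis image_eqI)
  next
    case False
    then obtain w where w: "w \<in> words_plus Y" "eU w = rees_class T' s" using eU_surj s by force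
    then have "rees_class T' (ev S phi w) = rees_class T' s" using eU_ev by simp
    then have "ev S phi w = s" using rc_inj False by blast
    then show ?thesis using E_Inr wp_Inr w by (metis image_eqI)
  qed
qed

end


context ext
begin

lemma Rz_step: "(u, v) \<in> Rz \<Longrightarrow> w1 \<in> lists Z \<Longrightarrow> w2 \<in> lists Z \<Longrightarrow> (w1 @ u @ w2, w1 @ v @ w2) \<in> rstep Z Rz"
  by (rule rstepI)

lemma lists_Inl: "w \<in> lists X \<Longrightarrow> map Inl w \<in> lists Z" unfolding Z_def by auto
lemma lists_Inr: "w \<in> lists Y \<Longrightarrow> map Inr w \<in> lists Z" unfolding Z_def by auto

lemma irr_Inl: "irr Z Rz (map Inl w) \<Longrightarrow> irr X R w"
proof -
  assume i: "irr Z Rz (map Inl w)"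
  show "irr X R w"
  proof (rule ccontr)
    assume "\<not> irr X R w"
    then obtain w1 u v w2 where "w = w1 @ u @ w2" "(u, v) \<in> R" "w1 \<in> lists X" "w2 \<in> lists X"
      unfolding irr_def rstep_def by blast
    moreover have "(map Inl u, map Inl v) \<in> R1" unfolding R1_def mr_def
      using calculation(2) by (rule rev_image_eqI) simp
    ultimately have "(map Inl w1 @ map Inl u @ map Inl w2, map Inl w1 @ map Inl v @ map Inl w2) \<in> rstep Z Rz"
      using Rz_step lists_Inl unfolding Rz_def by blast
    then have "(map Inl w, map Inl w1 @ map Inl v @ map Inl w2) \<in> rstep Z Rz" using \<open>w = w1 @ u @ w2\<close> by simp
    then show False using i unfolding irr_def by blast
  qed
qed

lemma irr_Inr: "w \<in> words_plus Y \<Longrightarrow> irr Z Rz (map Inr w) \<Longrightarrow> irr Y Q w \<and> eU w \<noteq> T'"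
proof -
  assume w: "w \<in> words_plus Y" and i: "irr Z Rz (map Inr w)"
  have ir: "irr Y Q w"
  proof (rule ccontr)
    assume "\<not> irr Y Q w"
    then obtain w1 u v w2 where d: "w = w1 @ u @ w2" "(u, v) \<in> Q" "w1 \<in> lists Y" "w2 \<in> lists Y"
      unfolding irr_def rstep_def by blast
    have "\<exists>v'. (map Inr u, v') \<in> Rz"
    proof (cases "eU u = T'")
      case True
      have "u \<in> fst ` Q" using d(2) by (rule rev_image_eqI) simp
      then have "(map Inr u, map Inl (wT (ev S phi u))) \<in> R3" using True unfolding R3_def by blast
      then show ?thesis unfolding Rz_def by blast
    next
      case False
      then have "(map Inr u, map Inr v) \<in> R2" using d(2) unfolding R2_def by blast
      then show ?thesis unfolding Rz_def by blast
    qed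
    then obtain v' where "(map Inr u, v') \<in> Rz" by blast
    then have "(map Inr w1 @ map Inr u @ map Inr w2, map Inr w1 @ v' @ map Inr w2) \<in> rstep Z Rz"
      using Rz_step lists_Inr d by blast
    then have "(map Inr w, map Inr w1 @ v' @ map Inr w2) \<in> rstep Z Rz" using d(1) by simp
    then show False using i unfolding irr_def by blast
  qed
  moreover have "eU w \<noteq> T'"
  proof
    assume eq: "eU w = T'"
    then have "w = z0" using eU_uniq[OF w _ ir] z0 by auto
    then have "(map Inr w, map Inl (wT (ev S phi z0))) \<in> R3" using z0 unfolding R3_def by blast
    then have "(map Inr w, map Inl (wT (ev S phi z0))) \<in> Rz" unfolding Rz_def by blast
    then have "(map Inr w, map Inl (wT (ev S phi z0))) \<in> rstep Z Rz" by (rule rstep_R)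
    then show False using i unfolding irr_def by blast
  qed
  ultimately show ?thesis by blast
qed

lemma mixed:
  "w \<in> lists Z \<Longrightarrow> \<exists>z\<in>set w. isl z \<Longrightarrow> \<exists>z\<in>set w. \<not> isl z \<Longrightarrow>
   \<exists>w1 w2 x y. x \<in> X \<and> y \<in> Y \<and> (w = w1 @ [Inl x, Inr y] @ w2 \<or> w = w1 @ [Inr y, Inl x] @ w2)"
proof (induction w)
  case Nil then show ?case by simp
next
  case (Cons z w)
  show ?case
  proof (cases "(\<exists>z\<in>set w. isl z) \<and> (\<exists>z\<in>set w. \<not> isl z)")
    case True
    then obtain w1 w2 x y where "x \<in> X \<and> y \<in> Y \<and> (w = w1 @ [Inl x, Inr y] @ w2 \<or> w = w1 @ [Inr y, Inl x] @ w2)"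
      using Cons by auto
    then show ?thesis by (metis append_Cons)
  next
    case False
    then have w: "w \<noteq> []" "isl (hd w) \<noteq> isl z" using Cons.prems
      by (cases w; auto)+
    then obtain z' w' where w': "w = z' # w'" by (cases w) auto
    have zz: "z \<in> Z" "z' \<in> Z" using Cons.prems(1) w' by simp_all
    have "z # w = [] @ [z, z'] @ w'" using w' by simp
    moreover have "isl z' \<noteq> isl z" using w w' by simp
    ultimately have e: "z # w = [] @ [z, z'] @ w'" "isl z' \<noteq> isl z" by auto
    show ?thesis
    proof (cases z)
      case (Inl x)
      then obtain y where y: "z' = Inr y" using e(2) by (cases z') auto
      have "x \<in> X" "y \<in> Y" using zz Inl y unfolding Z_def by auto
      then show ?thesis using e(1) Inl y by blast
    next
      case (Inr y)
      then obtain x where x: "z' = Inl x" using e(2) by (cases z') auto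
      have "x \<in> X" "y \<in> Y" using zz Inr x unfolding Z_def by auto
      then show ?thesis using e(1) Inr x by blast
    qed
  qed
qed

lemma Z_isl: "z \<in> Z \<Longrightarrow> isl z \<Longrightarrow> z \<in> Inl ` X"
  unfolding Z_def by auto

lemma Z_nisl: "z \<in> Z \<Longrightarrow> \<not> isl z \<Longrightarrow> z \<in> Inr ` Y"
  unfolding Z_def by auto

lemma irr_classify:
  assumes w: "w \<in> words_plus Z" and i: "irr Z Rz w"
  shows "(\<exists>w'. w' \<in> words_plus X \<and> w = map Inl w' \<and> irr X R w') \<or>
         (\<exists>w'. w' \<in> words_plus Y \<and> w = map Inr w' \<and> irr Y Q w' \<and> eU w' \<noteq> T')"
proof -
  have wl: "w \<in> lists Z" "w \<noteq> []" using w unfolding words_plus_def by auto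
  have "\<not> ((\<exists>z\<in>set w. isl z) \<and> (\<exists>z\<in>set w. \<not> isl z))"
  proof
    assume "(\<exists>z\<in>set w. isl z) \<and> (\<exists>z\<in>set w. \<not> isl z)"
    then obtain w1 w2 x y where m: "x \<in> X" "y \<in> Y" "w = w1 @ [Inl x, Inr y] @ w2 \<or> w = w1 @ [Inr y, Inl x] @ w2"
      using mixed wl by blast
    have l: "w1 \<in> lists Z" "w2 \<in> lists Z" using wl(1) m(3) by auto
    from m(3) show False
    proof
      assume e: "w = w1 @ [Inl x, Inr y] @ w2"
      have "([Inl x, Inr y], map Inl (wT (eT [x] \<otimes>\<^bsub>S\<^esub> phi y))) \<in> Rz" using m unfolding Rz_def R4a_def by auto
      then show False using Rz_step[OF _ l] i e unfolding irr_def by blast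
    next
      assume e: "w = w1 @ [Inr y, Inl x] @ w2"
      have "([Inr y, Inl x], map Inl (wT (phi y \<otimes>\<^bsub>S\<^esub> eT [x]))) \<in> Rz" using m unfolding Rz_def R4b_def by auto
      then show False using Rz_step[OF _ l] i e unfolding irr_def by blast
    qed
  qed
  then consider "\<forall>z\<in>set w. isl z" | "\<forall>z\<in>set w. \<not> isl z" by blast
  then show ?thesis
  proof cases
    case 1
    then have "w \<in> lists (Inl ` X)" using wl Z_isl by auto
    then obtain w' where "w' \<in> lists X" "w = map Inl w'" unfolding lists_image by auto
    moreover then have "w' \<noteq> []" using wl by auto
    ultimately show ?thesis using irr_Inl i unfolding words_plus_def by auto
  next
    case 2
    then have "w \<in> lists (Inr ` Y)" using wl Z_nisl by auto
    then obtain w' where w': "w' \<in> lists Y" "w = map Inr w'" unfolding lists_image by auto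
    moreover then have "w' \<in> words_plus Y" using wl unfolding words_plus_def by auto
    ultimately show ?thesis using irr_Inr i by auto
  qed
qed

lemma irr_unique:
  assumes u: "u \<in> words_plus Z" and v: "v \<in> words_plus Z" and iu: "irr Z Rz u" and iv: "irr Z Rz v"
    and eq: "E u = E v"
  shows "u = v"
proof -
  have L: "E (map Inl w') \<in> T'" if "w' \<in> words_plus X" for w' using that E_Inl eT_car by simp
  have N: "E (map Inr w') \<notin> T'" if "w' \<in> words_plus Y" "eU w' \<noteq> T'" for w'
    using that E_Inr eU_nonzero by simp
  from irr_classify[OF u iu] show ?thesis
  proof
    assume "\<exists>w'. w' \<in> words_plus X \<and> u = map Inl w' \<and> irr X R w'"
    then obtain u' where u': "u' \<in> words_plus X" "u = map Inl u'" "irr X R u'" by blast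
    from irr_classify[OF v iv] show ?thesis
    proof
      assume "\<exists>w'. w' \<in> words_plus X \<and> v = map Inl w' \<and> irr X R w'"
      then obtain v' where v': "v' \<in> words_plus X" "v = map Inl v'" "irr X R v'" by blast
      have "eT u' = eT v'" using eq u' v' E_Inl by simp
      then show ?thesis using eT_uniq u' v' by simp
    next
      assume "\<exists>w'. w' \<in> words_plus Y \<and> v = map Inr w' \<and> irr Y Q w' \<and> eU w' \<noteq> T'"
      then obtain v' where v': "v' \<in> words_plus Y" "v = map Inr v'" "eU v' \<noteq> T'" by blast
      then show ?thesis using L[OF u'(1)] N[OF v'(1,3)] eq u' by simp
    qed
  next
    assume "\<exists>w'. w' \<in> words_plus Y \<and> u = map Inr w' \<and> irr Y Q w' \<and> eU w' \<noteq> T'"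
    then obtain u' where u': "u' \<in> words_plus Y" "u = map Inr u'" "irr Y Q u'" "eU u' \<noteq> T'" by blast
    from irr_classify[OF v iv] show ?thesis
    proof
      assume "\<exists>w'. w' \<in> words_plus X \<and> v = map Inl w' \<and> irr X R w'"
      then obtain v' where v': "v' \<in> words_plus X" "v = map Inl v'" by blast
      then show ?thesis using L[OF v'(1)] N[OF u'(1,4)] eq u' by simp
    next
      assume "\<exists>w'. w' \<in> words_plus Y \<and> v = map Inr w' \<and> irr Y Q w' \<and> eU w' \<noteq> T'"
      then obtain v' where v': "v' \<in> words_plus Y" "v = map Inr v'" "irr Y Q v'" by blast
      have "ev S phi u' = ev S phi v'" using eq u' v' E_Inr by simp
      then have "eU u' = eU v'" using eU_ev u' v' by simp
      then show ?thesis using eU_uniq u' v' by simp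
    qed
  qed
qed

end


definition BM :: "('z \<Rightarrow> 'b option) \<Rightarrow> 'z list \<Rightarrow> 'b list multiset" where
  "BM f w = mset (filter (\<lambda>b. b \<noteq> []) (sp f w))"

lemma mult_block:
  assumes "a \<noteq> []" "\<forall>k\<in>set ks. k \<noteq> [] \<longrightarrow> (k, a) \<in> r"
  shows "(mset (filter (\<lambda>b. b \<noteq> []) (A @ ks @ B)), mset (filter (\<lambda>b. b \<noteq> []) (A @ [a] @ B))) \<in> Multiset.mult r"
proof -
  let ?F = "\<lambda>xs. mset (filter (\<lambda>b. b \<noteq> []) xs)"
  have m: "(?F A + ?F B + ?F ks, ?F A + ?F B + {#a#}) \<in> Multiset.mult r"
    using assms by (intro one_step_implies_mult) auto
  have e1: "?F (A @ ks @ B) = ?F A + ?F B + ?F ks" by (simp add: add_ac)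
  have e2: "?F (A @ [a] @ B) = ?F A + ?F B + {#a#}" using assms(1) by (simp add: add_ac)
  show ?thesis unfolding e1 e2 by (rule m)
qed

context ext
begin

definition fY :: "nat + nat \<Rightarrow> nat option" where "fY = case_sum (\<lambda>_. None) Some"
definition fX :: "nat + nat \<Rightarrow> nat option" where "fX = case_sum Some (\<lambda>_. None)"
definition mu :: "(nat + nat) list \<Rightarrow> nat list multiset \<times> nat list multiset" where
  "mu w = (BM fY w, BM fX w)"

lemma blocksY: "w \<in> lists Z \<Longrightarrow> b \<in> set (sp fY w) \<Longrightarrow> b \<in> lists Y"
proof -
  assume "w \<in> lists Z" "b \<in> set (sp fY w)"
  then show "b \<in> lists Y" using sp_sets[of b fY w] unfolding Z_def fY_def
    by (force split: sum.splits)
qed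

lemma blocksX: "w \<in> lists Z \<Longrightarrow> b \<in> set (sp fX w) \<Longrightarrow> b \<in> lists X"
proof -
  assume "w \<in> lists Z" "b \<in> set (sp fX w)"
  then show "b \<in> lists X" using sp_sets[of b fX w] unfolding Z_def fX_def
    by (force split: sum.splits)
qed

lemma last_sp: "last (sp f w) \<in> set (sp f w)" and hd_sp: "hd (sp f w) \<in> set (sp f w)"
  by auto

lemma fac: "a \<in> lists Y \<Longrightarrow> a = p @ b @ q \<Longrightarrow> p @ q \<noteq> [] \<Longrightarrow> (b, a) \<in> rY Y Q"
  unfolding rY_def by blast

lemma filter_rep [simp]: "filter (\<lambda>b. b \<noteq> []) (replicate n []) = []"
  by (induction n) auto

lemma step_mu:
  assumes st: "(w, w') \<in> rstep Z Rz"
  shows "(mu w', mu w) \<in> Multiset.mult (rY Y Q) <*lex*> Multiset.mult ((rstep X R)\<inverse>)"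
proof -
  obtain w1 u v w2 where e: "w = w1 @ u @ w2" "w' = w1 @ v @ w2" and r: "(u, v) \<in> Rz"
    and l: "w1 \<in> lists Z" "w2 \<in> lists Z" using st unfolding rstep_def by blast
  define AY where "AY = butlast (sp fY w1)"
  define cY where "cY = last (sp fY w1)"
  define dY where "dY = hd (sp fY w2)"
  define BY where "BY = tl (sp fY w2)"
  define AX where "AX = butlast (sp fX w1)"
  define cX where "cX = last (sp fX w1)"
  define dX where "dX = hd (sp fX w2)"
  define BX where "BX = tl (sp fX w2)"
  have cdY: "cY \<in> lists Y" "dY \<in> lists Y" unfolding cY_def dY_def using blocksY l last_sp hd_sp by blast+
  have cdX: "cX \<in> lists X" "dX \<in> lists X" unfolding cX_def dX_def using blocksX l last_sp hd_sp by blast+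
  let ?F = "\<lambda>xs. mset (filter (\<lambda>b. b \<noteq> []) xs)"
  have noneX: "\<forall>z\<in>set (map Inr a). fX z = None" for a :: "nat list" unfolding fX_def by auto
  have someX: "\<forall>z\<in>set (map Inl a). fX z \<noteq> None" for a :: "nat list" unfolding fX_def by auto
  have noneY: "\<forall>z\<in>set (map Inl a). fY z = None" for a :: "nat list" unfolding fY_def by auto
  have someY: "\<forall>z\<in>set (map Inr a). fY z \<noteq> None" for a :: "nat list" unfolding fY_def by auto
  have theX: "map (the \<circ> fX) (map Inl a) = a" for a :: "nat list" unfolding fX_def by (induction a) auto
  have theY: "map (the \<circ> fY) (map Inr a) = a" for a :: "nat list" unfolding fY_def by (induction a) auto
  have Ynone_ctx: "BM fY (w1 @ map Inl a @ w2) = ?F (AY @ [cY] @ [dY] @ BY)" if "a \<noteq> []" for a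
    unfolding BM_def AY_def cY_def dY_def BY_def using sp_ctx_none[of "map Inl a" fY w1 w2] noneY that by simp
  have Ysome_ctx: "BM fY (w1 @ map Inr a @ w2) = ?F (AY @ [cY @ a @ dY] @ BY)" for a
    unfolding BM_def AY_def cY_def dY_def BY_def using sp_ctx_some[of "map Inr a" fY w1 w2] someY theY by simp
  have Xsome_ctx: "BM fX (w1 @ map Inl a @ w2) = ?F (AX @ [cX @ a @ dX] @ BX)" for a
    unfolding BM_def AX_def cX_def dX_def BX_def using sp_ctx_some[of "map Inl a" fX w1 w2] someX theX by simp
  from r consider "(u, v) \<in> R1" | "(u, v) \<in> R2" | "(u, v) \<in> R3" | "(u, v) \<in> R4a" | "(u, v) \<in> R4b"
    unfolding Rz_def by blast
  then show ?thesis
  proof cases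
    case 1
    then obtain u0 v0 where uv: "(u0, v0) \<in> R" "u = map Inl u0" "v = map Inl v0" unfolding R1_def mr_def by auto
    have ne: "u0 \<noteq> []" "v0 \<noteq> []" using R_wp[OF uv(1)] unfolding words_plus_def by auto
    have Yeq: "BM fY w' = BM fY w" using e uv Ynone_ctx ne by simp
    have "(cX @ u0 @ dX, cX @ v0 @ dX) \<in> rstep X R" using rstep_ctxt[OF rstep_R[OF uv(1)] cdX] .
    then have "(?F (AX @ [cX @ v0 @ dX] @ BX), ?F (AX @ [cX @ u0 @ dX] @ BX)) \<in> Multiset.mult ((rstep X R)\<inverse>)"
      using ne by (intro mult_block) auto
    then have "(BM fX w', BM fX w) \<in> Multiset.mult ((rstep X R)\<inverse>)" using e uv Xsome_ctx by simp
    then show ?thesis using Yeq unfolding mu_def by simp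
  next
    case 2
    then obtain u0 v0 where uv: "(u0, v0) \<in> Q" "u = map Inr u0" "v = map Inr v0" unfolding R2_def by auto
    have ne: "u0 \<noteq> []" "v0 \<noteq> []" using Q_wp[OF uv(1)] unfolding words_plus_def by auto
    have "(cY @ u0 @ dY, cY @ v0 @ dY) \<in> rstep Y Q" using rstep_ctxt[OF rstep_R[OF uv(1)] cdY] .
    then have "(?F (AY @ [cY @ v0 @ dY] @ BY), ?F (AY @ [cY @ u0 @ dY] @ BY)) \<in> Multiset.mult (rY Y Q)"
      using ne unfolding rY_def by (intro mult_block) auto
    then have "(BM fY w', BM fY w) \<in> Multiset.mult (rY Y Q)" using e uv Ysome_ctx by simp
    then show ?thesis unfolding mu_def by simp
  next
    case 3
    then obtain u0 where uv: "u0 \<in> fst ` Q \<or> u0 = z0" "eU u0 = T'" "u = map Inr u0"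
      "v = map Inl (wT (ev S phi u0))" unfolding R3_def by auto
    have u0: "u0 \<in> words_plus Y" "ev S phi u0 \<in> T'" using R3_T uv by auto
    have ne: "u0 \<noteq> []" "wT (ev S phi u0) \<noteq> []" using u0 wT unfolding words_plus_def by auto
    have a: "cY @ u0 @ dY \<in> lists Y" using cdY u0 unfolding words_plus_def by auto
    have "(?F (AY @ [cY, dY] @ BY), ?F (AY @ [cY @ u0 @ dY] @ BY)) \<in> Multiset.mult (rY Y Q)"
    proof (rule mult_block)
      show "cY @ u0 @ dY \<noteq> []" using ne by simp
      have "(cY, cY @ u0 @ dY) \<in> rY Y Q" using fac[OF a, of "[]" cY "u0 @ dY"] ne by simp
      moreover have "(dY, cY @ u0 @ dY) \<in> rY Y Q" using fac[OF a, of "cY @ u0" dY "[]"] ne by simp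
      ultimately show "\<forall>k\<in>set [cY, dY]. k \<noteq> [] \<longrightarrow> (k, cY @ u0 @ dY) \<in> rY Y Q" by auto
    qed
    then have "(BM fY w', BM fY w) \<in> Multiset.mult (rY Y Q)" using e uv Ysome_ctx Ynone_ctx[OF ne(2)] by simp
    then show ?thesis unfolding mu_def by simp
  next
    case 4
    then obtain x y where uv: "x \<in> X" "y \<in> Y" "u = [Inl x, Inr y]" "v = map Inl (wT (eT [x] \<otimes>\<^bsub>S\<^esub> phi y))"
      unfolding R4a_def by auto
    have "eT [x] \<otimes>\<^bsub>S\<^esub> phi y \<in> T'" by (rule R4a_T[OF uv(1,2)])
    then have ne: "wT (eT [x] \<otimes>\<^bsub>S\<^esub> phi y) \<noteq> []" using wT unfolding words_plus_def by blast
    have spw: "sp fY w = AY @ [cY] @ [y # dY] @ BY"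
      unfolding AY_def cY_def dY_def BY_def e uv(3) by (rule sp_ctx_ns) (simp_all add: fY_def)
    have bw: "BM fY w = ?F ((AY @ [cY]) @ [y # dY] @ BY)" by (simp only: BM_def spw append_assoc)
    have "(?F ((AY @ [cY]) @ [dY] @ BY), ?F ((AY @ [cY]) @ [y # dY] @ BY)) \<in> Multiset.mult (rY Y Q)"
    proof -
      have dd: "(dY, y # dY) \<in> rY Y Q" by (rule fac[of _ "[y]" _ "[]"]) (use cdY uv(2) in auto)
      show ?thesis by (rule mult_block[where a="y # dY" and ks="[dY]" and A="AY @ [cY]" and B=BY]) (use dd in auto)
    qed
    moreover have "BM fY w' = ?F ((AY @ [cY]) @ [dY] @ BY)"
      unfolding e(2) uv(4) Ynone_ctx[OF ne] by (simp only: append_assoc)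
    ultimately have "(BM fY w', BM fY w) \<in> Multiset.mult (rY Y Q)" unfolding bw by simp
    then show ?thesis unfolding mu_def by simp
  next
    case 5
    then obtain x y where uv: "x \<in> X" "y \<in> Y" "u = [Inr y, Inl x]" "v = map Inl (wT (phi y \<otimes>\<^bsub>S\<^esub> eT [x]))"
      unfolding R4b_def by auto
    have "phi y \<otimes>\<^bsub>S\<^esub> eT [x] \<in> T'" by (rule R4b_T[OF uv(1,2)])
    then have ne: "wT (phi y \<otimes>\<^bsub>S\<^esub> eT [x]) \<noteq> []" using wT unfolding words_plus_def by blast
    have spw: "sp fY w = AY @ [cY @ [y]] @ [dY] @ BY"
      unfolding AY_def cY_def dY_def BY_def e uv(3) by (rule sp_ctx_sn) (simp_all add: fY_def)
    have bw: "BM fY w = ?F (AY @ [cY @ [y]] @ ([dY] @ BY))" by (simp only: BM_def spw append_assoc)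
    have "(?F (AY @ [cY] @ ([dY] @ BY)), ?F (AY @ [cY @ [y]] @ ([dY] @ BY))) \<in> Multiset.mult (rY Y Q)"
    proof -
      have dd: "(cY, cY @ [y]) \<in> rY Y Q" by (rule fac[of _ "[]" _ "[y]"]) (use cdY uv(2) in auto)
      show ?thesis by (rule mult_block[where a="cY @ [y]" and ks="[cY]" and A="AY" and B="[dY] @ BY"]) (use dd in auto)
    qed
    moreover have "BM fY w' = ?F (AY @ [cY] @ ([dY] @ BY))"
      unfolding e(2) uv(4) Ynone_ctx[OF ne] by (simp only: append_assoc)
    ultimately have "(BM fY w', BM fY w) \<in> Multiset.mult (rY Y Q)" unfolding bw by simp
    then show ?thesis unfolding mu_def by simp
  qed
qed

lemma noe_Rz: "noetherian_rs Z Rz"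
proof -
  let ?L = "Multiset.mult (rY Y Q) <*lex*> Multiset.mult ((rstep X R)\<inverse>)"
  have "wf ?L" using wf_rY[OF noeQ rsQ] noeR noeth_wf by (intro wf_lex_prod wf_mult) auto
  then have "wf (inv_image ?L mu)" by (rule wf_inv_image)
  moreover have "(rstep Z Rz)\<inverse> \<subseteq> inv_image ?L mu" using step_mu by auto
  ultimately have "wf ((rstep Z Rz)\<inverse>)" by (rule wf_subset)
  then show ?thesis using noeth_wf by auto
qed

lemma good_Z: "good S Z Rz E"
  unfolding good_def
proof (intro conjI ballI)
  show "finite Z" unfolding Z_def using finX finY by simp
  show "finite Rz" by (rule finite_Rz)
  show "rewriting_system Z Rz" by (rule rs_Rz)
  show "noetherian_rs Z Rz" by (rule noe_Rz)
  show "E w \<in> carrier S" if "w \<in> words_plus Z" for w using E_car that .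
  show "carrier S \<subseteq> E ` words_plus Z" by (rule E_surj)
  show "E (u @ v) = E u \<otimes>\<^bsub>S\<^esub> E v" if "u \<in> words_plus Z" "v \<in> words_plus Z" for u v using E_hom that .
  show "case p of (u, v) \<Rightarrow> E u = E v" if "p \<in> Rz" for p using rules_E that by (cases p) auto
  show "irr Z Rz u \<longrightarrow> irr Z Rz v \<longrightarrow> E u = E v \<longrightarrow> u = v" if "u \<in> words_plus Z" "v \<in> words_plus Z" for u v
    using irr_unique that by blast
qed

end


lemma rees_closed_gen:
  assumes sg: "is_semigroup S" and idl: "semigroup_ideal T' S"
    and "A \<in> carrier (rees_quotient S T')" "B \<in> carrier (rees_quotient S T')"
  shows "A \<otimes>\<^bsub>rees_quotient S T'\<^esub> B \<in> carrier (rees_quotient S T')"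
proof -
  obtain s t where st: "s \<in> carrier S" "t \<in> carrier S" "A = rees_class T' s" "B = rees_class T' t"
    using assms(3,4) unfolding rees_quotient_def by auto
  have sub: "rees_class T' r \<subseteq> carrier S" "\<exists>a. a \<in> rees_class T' r" if "r \<in> carrier S" for r
    using idl that unfolding semigroup_ideal_def rees_class_def by auto
  have "(SOME a. a \<in> A) \<in> A" "(SOME b. b \<in> B) \<in> B" using sub st by (metis someI_ex)+
  then have "(SOME a. a \<in> A) \<in> carrier S" "(SOME b. b \<in> B) \<in> carrier S" using sub st by auto
  then have "(SOME a. a \<in> A) \<otimes>\<^bsub>S\<^esub> (SOME b. b \<in> B) \<in> carrier S" using sg unfolding is_semigroup_def by auto
  then show ?thesis unfolding rees_quotient_def by auto
qed

theorem theorem1p2: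
  fixes S :: "'a monoid" and T :: "'b monoid" and U :: "'c monoid" and T' :: "'a set"
  assumes "is_semigroup S" and "is_semigroup T" and "is_semigroup U"
    and "semigroup_ideal T' S"
    and "T \<cong> \<lparr>carrier = T', mult = mult S, one = one S\<rparr>"
    and "rees_quotient S T' \<cong> U"
    and "defined_by_fcrs T" and "defined_by_fcrs U"
  shows "defined_by_fcrs S"
proof -
  obtain X :: "nat set" and R eT0 where gT0: "good T X R eT0" using good_of_fcrs[OF assms(2) assms(7)] by blast
  obtain h where h: "h \<in> iso T \<lparr>carrier = T', mult = mult S, one = one S\<rparr>" using assms(5) unfolding is_iso_def by blast
  have gT: "good \<lparr>carrier = T', mult = mult S, one = one S\<rparr> X R (h \<circ> eT0)" using good_iso[OF gT0 h] .
  obtain Y :: "nat set" and Q eU0 where gU0: "good U Y Q eU0" using good_of_fcrs[OF assms(3) assms(8)] by blast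
  obtain k where k: "k \<in> iso (rees_quotient S T') U" using assms(6) unfolding is_iso_def by blast
  have k': "inv_into (carrier (rees_quotient S T')) k \<in> iso U (rees_quotient S T')"
    using iso_inv_gen[OF k] rees_closed_gen[OF assms(1) assms(4)] by blast
  have gU: "good (rees_quotient S T') Y Q (inv_into (carrier (rees_quotient S T')) k \<circ> eU0)"
    using good_iso[OF gU0 k'] .
  interpret ext S T' X R "h \<circ> eT0" Y Q "inv_into (carrier (rees_quotient S T')) k \<circ> eU0"
    using assms(1) assms(4) gT gU by unfold_locales
  show ?thesis using good_fcrs_countable[OF good_Z] .
qed


end
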